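(* Let $\psi:\mathbb R^n\to\mathbb R$ be convex, $x_0\in\mathbb R^n$, $p_0\in\partial\psi(x_0)$, $t>0$, and let $\Omega\subset\mathbb R^n$. Suppose $S(x_0,p_0,t)$ is bounded with nonempty interior and there exists $\gamma\in(0,1)$ such that $$\gamma^{-1}S(x_0,p_0,t)\subset S(x_0,p_0,2t)\subset\Omega.$$ Then there exists $\theta>1$ depending only on $n$ and $\gamma$ such that for every $y\in S(x_0,p_0,t)$ and every $q\in\partial\psi(y)$ we have $S(x_0,p_0,t)\subset S(y,q,\theta t)$.
   Context: Sections: for $x_0\in\mathbb R^n$, $p_0\in\partial\psi(x_0)$, $t\ge0$, $S(x_0,p_0,t)=\{x\in\mathbb R^n:\psi(x)\le\psi(x_0)+p_0\cdot(x-x_0)+t\}$. For $\kappa>0$, $\kappa S(x_0,p_0,t)=\{x_0^*+\kappa(x-x_0^* ):x\in S(x_0,p_0,t)\}$ is the dilation with respect to the center of mass $x_0^*$ of $S(x_0,p_0,t)$. *)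

theory Defs
  imports "HOL-Analysis.Analysis"
begin

definition subdiff :: "('a::euclidean_space \<Rightarrow> real) \<Rightarrow> 'a \<Rightarrow> 'a set" where
  "subdiff \<psi> x = {p. \<forall>y. \<psi> y \<ge> \<psi> x + p \<bullet> (y - x)}"

definition sect :: "('a::euclidean_space \<Rightarrow> real) \<Rightarrow> 'a \<Rightarrow> 'a \<Rightarrow> real \<Rightarrow> 'a set" where
  "sect \<psi> x0 p0 t = {x. \<psi> x \<le> \<psi> x0 + p0 \<bullet> (x - x0) + t}"

definition centroid :: "'a::euclidean_space set \<Rightarrow> 'a" where
  "centroid A = (1 / measure lebesgue A) *\<^sub>R (\<integral>x\<in>A. x \<partial>lebesgue)"

definition dilate :: "real \<Rightarrow> 'a::euclidean_space set \<Rightarrow> 'a set" where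
  "dilate \<kappa> A = (\<lambda>x. centroid A + \<kappa> *\<^sub>R (x - centroid A)) ` A"

end

theory Submission
  imports Defs
begin
lemma cint:
  fixes f :: "'a::euclidean_space \<Rightarrow> 'b::euclidean_space"
  assumes "compact K" "continuous_on UNIV f"
  shows "set_integrable lebesgue K f"
proof -
  have "integrable lborel (\<lambda>x. indicator K x *\<^sub>R f x)"
    using borel_integrable_compact[OF assms(1)] assms(2) continuous_on_subset by blast
  then show ?thesis unfolding set_integrable_def
    by (simp add: integrable_completion borel_measurable_integrable)
qed

lemma centroid_lemma:
  fixes K :: "'a::euclidean_space set" and w :: 'a
  assumes cK: "compact K" and cv: "convex K" and mpos: "measure lebesgue K > 0" and wK: "w \<in> K"
  shows "centroid K - (1/(2 * 2^DIM('a))) *\<^sub>R (w - centroid K) \<in> K"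
proof (rule ccontr)
  define c where "c = centroid K"
  define \<mu> where "\<mu> = measure lebesgue K"
  define P :: real where "P = 2^DIM('a)"
  have P0: "P > 0" unfolding P_def by simp
  define p where "p = c - (1/(2*P)) *\<^sub>R (w - c)"
  assume "centroid K - (1/(2 * 2^DIM('a))) *\<^sub>R (w - centroid K) \<notin> K"
  hence pK: "p \<notin> K" unfolding p_def c_def P_def by simp
  obtain v b where vp: "v \<bullet> p < b" and vK: "\<forall>x\<in>K. v \<bullet> x > b"
    using separating_hyperplane_closed_point[OF cv compact_imp_closed[OF cK] pK] by blast
  define h where "h = v \<bullet> (w - c)"
  define \<delta> where "\<delta> = b - v \<bullet> p"
  have d0: "\<delta> > 0" using vp unfolding \<delta>_def by simp
  define h' where "h' = h/(2*P) - \<delta>"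
  have vpe: "v \<bullet> p = v \<bullet> c - h/(2*P)" unfolding p_def h_def by (simp add: inner_diff_right)
  have lb: "v \<bullet> x - v \<bullet> c \<ge> - h'" if "x \<in> K" for x
    using vK that vpe unfolding h'_def \<delta>_def by force
  define g where "g x = v \<bullet> x - v \<bullet> c + h'" for x
  define I where "I = (LINT x:K|lebesgue. x)"
  have cI: "c = (1/\<mu>) *\<^sub>R I" unfolding c_def centroid_def I_def \<mu>_def by simp
  hence Ie: "I = \<mu> *\<^sub>R c" using mpos unfolding \<mu>_def by simp
  have intx: "set_integrable lebesgue K (\<lambda>x. x)" by (rule cint[OF cK]) (simp add: continuous_on_id)
  have intvx: "(LINT x:K|lebesgue. v \<bullet> x) = \<mu> * (v \<bullet> c)"
  proof -
    have "(LINT x:K|lebesgue. v \<bullet> x) = (\<integral>x. v \<bullet> (indicator K x *\<^sub>R x) \<partial>lebesgue)"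
      unfolding set_lebesgue_integral_def by (intro Bochner_Integration.integral_cong) auto
    also have "\<dots> = v \<bullet> I" unfolding I_def set_lebesgue_integral_def
      using intx unfolding set_integrable_def by (subst integral_inner_right) auto
    finally show ?thesis using Ie by simp
  qed
  have gcont: "continuous_on UNIV g" unfolding g_def by (intro continuous_intros)
  have intg: "set_integrable lebesgue K g" by (rule cint[OF cK gcont])
  have mfin: "K \<in> lmeasurable" using lmeasurable_compact[OF cK] .
  have Ig: "(LINT x:K|lebesgue. g x) = h' * \<mu>"
  proof -
    have i1: "set_integrable lebesgue K (\<lambda>x. v \<bullet> x)" by (rule cint[OF cK]) (intro continuous_intros)
    have i2: "set_integrable lebesgue K (\<lambda>x. h' - v \<bullet> c)" by (rule cint[OF cK]) (intro continuous_intros)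
    have "(LINT x:K|lebesgue. g x) = (LINT x:K|lebesgue. v \<bullet> x + (h' - v \<bullet> c))"
      unfolding g_def by (simp add: algebra_simps)
    also have "\<dots> = \<mu> * (v \<bullet> c) + (h' - v \<bullet> c) * \<mu>"
    proof -
      have "(LINT x:K|lebesgue. h' - v \<bullet> c) = \<mu> *\<^sub>R (h' - v \<bullet> c)"
        unfolding \<mu>_def by (rule set_integral_const) (use mfin in \<open>auto simp: fmeasurable_def\<close>)
      thus ?thesis using set_integral_add(2)[OF i1 i2] intvx unfolding \<mu>_def by (simp add: algebra_simps)
    qed
    finally show ?thesis by (simp add: algebra_simps)
  qed
  define K' where "K' = (\<lambda>x. (1/2) *\<^sub>R x + (1/2) *\<^sub>R w) ` K"
  have K'K: "K' \<subseteq> K"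
  proof
    fix y assume "y \<in> K'"
    then obtain u where u: "u \<in> K" "y = (1/2) *\<^sub>R u + (1/2) *\<^sub>R w" unfolding K'_def by blast
    show "y \<in> K" using cv u wK unfolding convex_def by (metis field_sum_of_halves less_eq_real_def zero_less_divide_1_iff zero_less_numeral)
  qed
  have cK': "compact K'" unfolding K'_def
    by (intro compact_continuous_image cK continuous_intros)
  have mK': "measure lebesgue K' = (1/P) * \<mu>"
    unfolding K'_def \<mu>_def P_def using measure_lebesgue_affine[of "1/2" "(1/2) *\<^sub>R w" K]
    by (simp add: power_one_over)
  define C where "C = (h + h')/2"
  have gK': "g x \<ge> C" if xK': "x \<in> K'" for x
  proof -
    obtain u where u: "u \<in> K" "x = (1/2) *\<^sub>R u + (1/2) *\<^sub>R w" using xK' unfolding K'_def by blast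
    have "g x = (v \<bullet> u - v \<bullet> c)/2 + h/2 + h'"
      unfolding g_def h_def u(2) by (simp add: inner_add_right inner_diff_right field_simps)
    hence "g x - C = ((v \<bullet> u - v \<bullet> c) + h') / 2" unfolding C_def by (simp add: field_simps)
    moreover have "(v \<bullet> u - v \<bullet> c) + h' \<ge> 0" using lb[OF u(1)] by simp
    ultimately show ?thesis by simp
  qed
  have intC: "set_integrable lebesgue K (\<lambda>x. C * indicator K' x)"
  proof -
    have "integrable lebesgue (\<lambda>x. C * indicator K' x)"
      using lmeasurable_compact[OF cK'] by (intro integrable_mult_right integrable_real_indicator) (auto simp: fmeasurable_def)
    moreover have "(\<lambda>x. indicator K x *\<^sub>R (C * indicator K' x)) = (\<lambda>x. C * indicator K' x)"
      using K'K by (auto simp: indicator_def fun_eq_iff)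
    ultimately show ?thesis unfolding set_integrable_def by simp
  qed
  have IC: "(LINT x:K|lebesgue. C * indicator K' x) = C * ((1/P) * \<mu>)"
  proof -
    have "(\<lambda>x. indicator K x *\<^sub>R (C * indicator K' x)) = (\<lambda>x. C * indicator K' x)"
      using K'K by (auto simp: indicator_def fun_eq_iff)
    hence "(LINT x:K|lebesgue. C * indicator K' x) = (\<integral>x. C * indicator K' x \<partial>lebesgue)"
      unfolding set_lebesgue_integral_def by simp
    also have "\<dots> = C * measure lebesgue K'"
      using lmeasurable_compact[OF cK'] by (simp add: fmeasurable_def)
    finally show ?thesis using mK' by simp
  qed
  have "(LINT x:K|lebesgue. C * indicator K' x) \<le> (LINT x:K|lebesgue. g x)"
  proof (rule set_integral_mono[OF intC intg])
    fix x assume "x \<in> K"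
    show "C * indicator K' x \<le> g x"
      using gK'[of x] lb[OF \<open>x \<in> K\<close>] unfolding g_def by (auto simp: indicator_def)
  qed
  hence ineq: "C * ((1/P) * \<mu>) \<le> h' * \<mu>" using IC Ig by simp
  have m0: "\<mu> > 0" using mpos unfolding \<mu>_def .
  have "(C / P) * \<mu> \<le> h' * \<mu>" using ineq by simp
  hence "C / P \<le> h'" using m0 by (meson mult_right_le_imp_le)
  hence "C \<le> h' * P" using P0 by (simp add: field_simps)
  hence A: "h + h' \<le> 2 * P * h'" unfolding C_def by (simp add: algebra_simps)
  have B: "h \<ge> - h'" using lb[OF wK] unfolding h_def by (simp add: inner_diff_right)
  have he: "h = 2*P*(h' + \<delta>)" using P0 unfolding h'_def by (simp add: field_simps)
  have he2: "h = 2*P*h' + 2*P*\<delta>" using he by (simp add: algebra_simps)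
  have Pd: "2*P*\<delta> > 0" using P0 d0 by simp
  have h'neg: "h' < 0" using A he2 Pd by linarith
  have "2*P*h' \<ge> 0" using A B he2 Pd by linarith
  hence "h' \<ge> 0" using P0 by (simp add: zero_le_mult_iff)
  with h'neg show False by simp
qed
lemma sect_convex:
  assumes "convex_on UNIV \<psi>"
  shows "convex (sect \<psi> x0 p0 s)"
  unfolding convex_def sect_def
proof (intro allI impI ballI, clarify)
  fix u v :: 'a and a b :: real
  assume u: "\<psi> u \<le> \<psi> x0 + p0 \<bullet> (u - x0) + s" and v: "\<psi> v \<le> \<psi> x0 + p0 \<bullet> (v - x0) + s"
    and a: "0 \<le> a" and b: "0 \<le> b" and ab: "a + b = 1"
  have "\<psi> (a *\<^sub>R u + b *\<^sub>R v) \<le> a * \<psi> u + b * \<psi> v"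
    using convex_onD[OF assms, of b u v] a b ab by (simp add: eq_diff_eq[symmetric])
  also have "\<dots> \<le> a * (\<psi> x0 + p0 \<bullet> (u - x0) + s) + b * (\<psi> x0 + p0 \<bullet> (v - x0) + s)"
    using u v a b by (intro add_mono mult_left_mono) auto
  also have "\<dots> = (a + b) * (\<psi> x0 + s) + p0 \<bullet> (a *\<^sub>R u + b *\<^sub>R v) - (a + b) * (p0 \<bullet> x0)"
    by (simp add: inner_diff_right inner_add_right algebra_simps)
  also have "\<dots> = \<psi> x0 + p0 \<bullet> (a *\<^sub>R u + b *\<^sub>R v - x0) + s"
    using ab by (simp add: inner_diff_right)
  finally show "\<psi> (a *\<^sub>R u + b *\<^sub>R v) \<le> \<psi> x0 + p0 \<bullet> (a *\<^sub>R u + b *\<^sub>R v - x0) + s" .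
qed

lemma sect_closed:
  assumes "convex_on UNIV \<psi>"
  shows "closed (sect \<psi> x0 p0 s)"
proof -
  have c: "continuous_on UNIV \<psi>" using convex_on_continuous[OF open_UNIV assms] .
  have "sect \<psi> x0 p0 s = {x. \<psi> x \<le> \<psi> x0 + p0 \<bullet> (x - x0) + s}" unfolding sect_def ..
  also have "closed \<dots>"
    by (intro closed_Collect_le continuous_intros c)
  finally show ?thesis .
qed

theorem mainTheorem9:
  fixes \<gamma> :: real
  assumes "0 < \<gamma>" "\<gamma> < 1"
  shows "\<exists>\<theta>>1. \<forall>(\<psi>::'a::euclidean_space \<Rightarrow> real) x0 p0 t (\<Omega>::'a set).
           convex_on UNIV \<psi> \<and> p0 \<in> subdiff \<psi> x0 \<and> t > 0 \<and>
           bounded (sect \<psi> x0 p0 t) \<and> interior (sect \<psi> x0 p0 t) \<noteq> {} \<and>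
           dilate (1 / \<gamma>) (sect \<psi> x0 p0 t) \<subseteq> sect \<psi> x0 p0 (2 * t) \<and>
           sect \<psi> x0 p0 (2 * t) \<subseteq> \<Omega>
           \<longrightarrow> (\<forall>y \<in> sect \<psi> x0 p0 t. \<forall>q \<in> subdiff \<psi> y.
                  sect \<psi> x0 p0 t \<subseteq> sect \<psi> y q (\<theta> * t))"
proof -
  define N :: real where "N = 2 * 2^DIM('a)"
  have N0: "N > 0" unfolding N_def by simp
  define l where "l = (1 - \<gamma>) / (\<gamma> + N)"
  have l0: "l > 0" unfolding l_def using assms N0 by simp
  have gN: "\<gamma> + N > 0" using assms N0 by simp
  have gl: "(\<gamma> + N) * l = 1 - \<gamma>" unfolding l_def using gN by simp
  have lid: "\<gamma> * (1 + l) + N * l = 1" using gl by (simp add: algebra_simps)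
  define \<theta> where "\<theta> = 1 + 2 / l"
  have th1: "\<theta> > 1" unfolding \<theta>_def using l0 by simp
  show ?thesis
  proof (intro exI[of _ \<theta>] conjI th1 allI impI ballI subsetI)
    fix \<psi> :: "'a \<Rightarrow> real" and x0 p0 t and \<Omega> :: "'a set" and y q x
    assume H: "convex_on UNIV \<psi> \<and> p0 \<in> subdiff \<psi> x0 \<and> t > 0 \<and>
           bounded (sect \<psi> x0 p0 t) \<and> interior (sect \<psi> x0 p0 t) \<noteq> {} \<and>
           dilate (1 / \<gamma>) (sect \<psi> x0 p0 t) \<subseteq> sect \<psi> x0 p0 (2 * t) \<and>
           sect \<psi> x0 p0 (2 * t) \<subseteq> \<Omega>"
      and yK: "y \<in> sect \<psi> x0 p0 t" and qs: "q \<in> subdiff \<psi> y" and xK: "x \<in> sect \<psi> x0 p0 t"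
    define K where "K = sect \<psi> x0 p0 t"
    define K2 where "K2 = sect \<psi> x0 p0 (2*t)"
    have cvx: "convex_on UNIV \<psi>" and p0s: "p0 \<in> subdiff \<psi> x0" and t0: "t > 0"
      and bd: "bounded K" and int: "interior K \<noteq> {}" and dil: "dilate (1/\<gamma>) K \<subseteq> K2"
      using H unfolding K_def K2_def by auto
    have cK: "compact K" using bd sect_closed[OF cvx] unfolding K_def by (simp add: compact_eq_bounded_closed)
    have cvK: "convex K" unfolding K_def by (rule sect_convex[OF cvx])
    have cvK2: "convex K2" unfolding K2_def by (rule sect_convex[OF cvx])
    have KK2: "K \<subseteq> K2" unfolding K_def K2_def sect_def using t0 by auto
    have mpos: "measure lebesgue K > 0"
    proof -
      have lm: "K \<in> lmeasurable" by (rule lmeasurable_compact[OF cK])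
      have "\<not> negligible K" using negligible_convex_interior[OF cvK] int by simp
      hence "measure lebesgue K \<noteq> 0" using negligible_iff_measure0[OF lm] by simp
      thus ?thesis using measure_nonneg[of lebesgue K] by linarith
    qed
    define c where "c = centroid K"
    have yK': "y \<in> K" and xK': "x \<in> K" using yK xK unfolding K_def by auto
    define y' where "y' = c + (1/\<gamma>) *\<^sub>R (y - c)"
    have y'K2: "y' \<in> K2" using dil yK' unfolding dilate_def y'_def c_def by auto
    define m where "m = c - (1/N) *\<^sub>R (x - c)"
    have mK2: "m \<in> K2" using centroid_lemma[OF cK cvK mpos xK'] KK2 unfolding m_def c_def N_def by auto
    define \<alpha> where "\<alpha> = \<gamma> * (1 + l)"
    define \<beta> where "\<beta> = N * l"
    define z where "z = \<alpha> *\<^sub>R y' + \<beta> *\<^sub>R m"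
    have zK2: "z \<in> K2" unfolding z_def
      using cvK2 y'K2 mK2 lid l0 N0 assms unfolding convex_def \<alpha>_def \<beta>_def by simp
    have "z = (\<alpha> + \<beta>) *\<^sub>R c + (\<alpha> / \<gamma>) *\<^sub>R (y - c) - (\<beta> / N) *\<^sub>R (x - c)"
      unfolding z_def y'_def m_def by (simp add: algebra_simps)
    also have "\<dots> = c + (1 + l) *\<^sub>R (y - c) - l *\<^sub>R (x - c)"
      using lid assms N0 unfolding \<alpha>_def \<beta>_def by simp
    also have "\<dots> = y + l *\<^sub>R (y - x)" by (simp add: algebra_simps)
    finally have ze: "z = y + l *\<^sub>R (y - x)" .
    have z2: "\<psi> z \<le> \<psi> x0 + p0 \<bullet> (z - x0) + 2*t" using zK2 unfolding K2_def sect_def by simp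
    have zq: "\<psi> z \<ge> \<psi> y + q \<bullet> (z - y)" using qs unfolding subdiff_def by simp
    have y0: "\<psi> y \<ge> \<psi> x0 + p0 \<bullet> (y - x0)" using p0s unfolding subdiff_def by simp
    have x1: "\<psi> x \<le> \<psi> x0 + p0 \<bullet> (x - x0) + t" using xK unfolding sect_def by simp
    define Q where "Q = q \<bullet> (y - x)"
    define R where "R = p0 \<bullet> (y - x)"
    have e1: "q \<bullet> (z - y) = l * Q" unfolding ze Q_def by simp
    have e2: "p0 \<bullet> (z - x0) = p0 \<bullet> (y - x0) + l * R" unfolding ze R_def
      by (simp add: inner_add_right inner_diff_right)
    have e3: "q \<bullet> (x - y) = - Q" unfolding Q_def by (simp add: inner_diff_right)
    have e4: "p0 \<bullet> (x - x0) = p0 \<bullet> (y - x0) - R" unfolding R_def by (simp add: inner_diff_right)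
    have "l * (Q - R) \<le> 2 * t" using z2 zq y0 e1 e2 by (simp add: algebra_simps)
    hence QR: "Q - R \<le> 2 * t / l" using l0 by (simp add: field_simps)
    have th: "\<theta> * t = t + 2 * t / l" unfolding \<theta>_def by (simp add: algebra_simps)
    show "x \<in> sect \<psi> y q (\<theta> * t)" unfolding sect_def
      using x1 y0 e3 e4 QR th by simp
  qed
qed
end
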